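(* Consider the mesoscopic contact process with sexual reproduction $(\xi_t)$ on $\mathbb{Z}$ with patch size $N\ge 2$, dispersal range $M$ and birth parameters $a,b\ge0$, started from $\xi_0=\mathbf{1}_x$. Call a collision the event that two offspring produced by parents in patch $x$ are sent to the same patch $y\ne x$. For all $M$ sufficiently large: (1) if $a<4$, $P(\text{collision}\mid\xi_0=\mathbf{1}_x)\le M^{-1/3}\big(1/2+bN(1-a/4)^{-1}\big)$; (2) if $a=4$, $P(\text{collision}\mid\xi_0=\mathbf{1}_x)\le M^{-1/3}\big(1/2+(b/2)(N+2)^2\big)$; (3) if $a>4$, $P(\text{collision}\mid\xi_0=\mathbf{1}_x)\le M^{-1/3}\big(1/2+b(a/4-1)^{-2}(a/4)^{N+2}\big)$.
   Context: For $x,y\in\mathbb{Z}$ write $x\sim y$ iff $x\neq y$ and $|x-y|\le M$. The process $\xi_t:\mathbb{Z}\to\{0,\dots,N\}$ counts individuals per patch: $\xi(x)\to\xi(x)-1$ at rate $\xi(x)$; $\xi(x)\to\xi(x)+1$ at rate $\frac{a}{N(N-1)}\xi(x)(\xi(x)-1)(N-\xi(x))$ (offspring of parents in patch $x$ staying in $x$) plus, for each $y\sim x$, rate $\frac{1}{2M}\frac{b}{N(N-1)}\xi(y)(\xi(y)-1)(N-\xi(x))$ (offspring of parents in patch $y$ sent to patch $x$). $\mathbf{1}_x$ is the configuration with $N$ individuals at $x$ and none elsewhere. *)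

theory Defs
  imports "HOL-Probability.Probability"
begin

text \<open>The collision probability is computed
  from the (labelled) embedded jump chain of the continuous-time process.\<close>

text \<open>Elementary transitions: death of one individual in patch z, or birth of
  one individual in patch z from parents in patch y (Birth y z).\<close>
datatype trans = Death int | Birth int int

type_synonym config = "int \<Rightarrow> nat"

text \<open>State of the jump chain: configuration, set of patches y different from x
  that have already received an offspring of parents in patch x, collision flag.\<close>
type_synonym cstate = "config \<times> int set \<times> bool"

definition nbr :: "nat \<Rightarrow> int \<Rightarrow> int \<Rightarrow> bool" where
  "nbr M y z \<longleftrightarrow> y \<noteq> z \<and> \<bar>y - z\<bar> \<le> int M"

definition rate :: "nat \<Rightarrow> nat \<Rightarrow> real \<Rightarrow> real \<Rightarrow> config \<Rightarrow> trans \<Rightarrow> real" where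
  "rate N M a b \<xi> t = (case t of
      Death z \<Rightarrow> real (\<xi> z)
    | Birth y z \<Rightarrow>
        (if y = z then
           a / (real N * (real N - 1)) * real (\<xi> z) * (real (\<xi> z) - 1) * (real N - real (\<xi> z))
         else if nbr M y z then
           (1 / (2 * real M)) * (b / (real N * (real N - 1)))
             * real (\<xi> y) * (real (\<xi> y) - 1) * (real N - real (\<xi> z))
         else 0))"

definition active :: "nat \<Rightarrow> nat \<Rightarrow> real \<Rightarrow> real \<Rightarrow> config \<Rightarrow> trans set" where
  "active N M a b \<xi> = {t. rate N M a b \<xi> t \<noteq> 0}"

definition total_rate :: "nat \<Rightarrow> nat \<Rightarrow> real \<Rightarrow> real \<Rightarrow> config \<Rightarrow> real" where
  "total_rate N M a b \<xi> = (\<Sum>t\<in>active N M a b \<xi>. rate N M a b \<xi> t)"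

fun apply_trans :: "config \<Rightarrow> trans \<Rightarrow> config" where
  "apply_trans \<xi> (Death z) = \<xi>(z := \<xi> z - 1)"
| "apply_trans \<xi> (Birth y z) = \<xi>(z := \<xi> z + 1)"

definition upd :: "int \<Rightarrow> cstate \<Rightarrow> trans \<Rightarrow> cstate" where
  "upd x s t = (case s of (\<xi>, H, c) \<Rightarrow>
     (case t of
        Birth y z \<Rightarrow>
          if y = x \<and> z \<noteq> x then (apply_trans \<xi> t, insert z H, c \<or> z \<in> H)
          else (apply_trans \<xi> t, H, c)
      | Death z \<Rightarrow> (apply_trans \<xi> t, H, c)))"

definition step :: "nat \<Rightarrow> nat \<Rightarrow> real \<Rightarrow> real \<Rightarrow> int \<Rightarrow> cstate \<Rightarrow> cstate pmf" where
  "step N M a b x s = (case s of (\<xi>, H, c) \<Rightarrow>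
     if finite (active N M a b \<xi>) \<and> total_rate N M a b \<xi> > 0
     then map_pmf (upd x s) (embed_pmf (\<lambda>t. rate N M a b \<xi> t / total_rate N M a b \<xi>))
     else return_pmf s)"

fun chain :: "nat \<Rightarrow> nat \<Rightarrow> real \<Rightarrow> real \<Rightarrow> int \<Rightarrow> nat \<Rightarrow> cstate \<Rightarrow> cstate pmf" where
  "chain N M a b x 0 s = return_pmf s"
| "chain N M a b x (Suc n) s = bind_pmf (chain N M a b x n s) (step N M a b x)"

definition one_at :: "nat \<Rightarrow> int \<Rightarrow> config" where
  "one_at N x = (\<lambda>z. if z = x then N else 0)"

text \<open>Probability that a collision ever happens, starting from 1_x
  (limit of the non-decreasing probabilities of a collision within n jumps).\<close>
definition collision_prob :: "nat \<Rightarrow> nat \<Rightarrow> real \<Rightarrow> real \<Rightarrow> int \<Rightarrow> real" where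
  "collision_prob N M a b x =
     (SUP n. measure_pmf.prob (chain N M a b x n (one_at N x, {}, False)) {s. snd (snd s)})"

end

theory Submission
  imports Defs
begin


fun dd :: "nat \<Rightarrow> (nat\<Rightarrow>real) \<Rightarrow> (nat\<Rightarrow>real) \<Rightarrow> nat \<Rightarrow> real" where
  "dd N al c 0 = c N / real N"
| "dd N al c (Suc j) = (c (N - Suc j) + al (N - Suc j) * dd N al c j) / real (N - Suc j)"

lemma dd_nonneg:
  assumes "\<And>k. k \<in> {1..N} \<Longrightarrow> al k \<ge> 0" "\<And>k. k \<in> {1..N} \<Longrightarrow> c k \<ge> 0"
  shows "dd N al c j \<ge> 0"
proof (induction j)
  case 0 show ?case using assms(2)[of N] by (cases N) auto
next
  case (Suc j)
  show ?case
  proof (cases "N - Suc j = 0")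
    case True then show ?thesis by simp
  next
    case False
    then have "N - Suc j \<in> {1..N}" by auto
    then show ?thesis using Suc assms by (simp add: divide_nonneg_pos)
  qed
qed

lemma supersol:
  fixes al c :: "nat \<Rightarrow> real"
  assumes "\<And>k. k \<in> {1..N} \<Longrightarrow> al k \<ge> 0" "\<And>k. k \<in> {1..N} \<Longrightarrow> c k \<ge> 0" "al N = 0"
  shows "\<exists>A. A 0 = 0 \<and> (\<forall>k. A k \<ge> 0) \<and>
     (\<forall>k\<in>{1..N}. real k * (A (k-1) - A k) + al k * (A (k+1) - A k) + c k \<le> 0)"
proof -
  define d where "d i = dd N al c (N - i)" for i
  define A where "A k = (\<Sum>i\<in>{1..k}. d i)" for k
  have dn: "d i \<ge> 0" for i unfolding d_def by (rule dd_nonneg[OF assms(1,2)])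
  have "\<forall>k\<in>{1..N}. real k * (A (k-1) - A k) + al k * (A (k+1) - A k) + c k \<le> 0"
  proof
    fix k assume k: "k \<in> {1..N}"
    have A1: "A (k-1) - A k = - d k" unfolding A_def using k
      by (cases k) (auto simp: sum.atLeast_Suc_atMost_Suc_shift)
    have A2: "A (k+1) - A k = d (k+1)" unfolding A_def by simp
    have "real k * d k = c k + al k * d (k+1)"
    proof (cases "k = N")
      case True then show ?thesis using k assms(3) by (simp add: d_def)
    next
      case False
      then have e: "N - k = Suc (N - (k+1))" using k by auto
      have e2: "N - Suc (N - (k+1)) = k" using k False by auto
      have "d k = (c k + al k * d (k+1)) / real k"
        unfolding d_def e by (simp only: dd.simps e2)
      then show ?thesis using k by simp
    qed
    then show "real k * (A (k-1) - A k) + al k * (A (k+1) - A k) + c k \<le> 0"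
      unfolding A1 A2 by (simp add: algebra_simps)
  qed
  moreover have "\<forall>k. A k \<ge> 0" unfolding A_def using dn by (simp add: sum_nonneg)
  moreover have "A 0 = 0" unfolding A_def by simp
  ultimately show ?thesis by blast
qed



definition alf :: "nat \<Rightarrow> real \<Rightarrow> nat \<Rightarrow> real" where
  "alf N a k = a / (real N * (real N - 1)) * real k * (real k - 1) * (real N - real k)"
definition eef :: "nat \<Rightarrow> real \<Rightarrow> nat \<Rightarrow> real" where
  "eef N b k = b / (real N * (real N - 1)) * real k * (real k - 1)"

definition Inv :: "nat \<Rightarrow> int \<Rightarrow> cstate \<Rightarrow> bool" where
  "Inv N x s = (case s of (\<xi>,H,c) \<Rightarrow> c \<or> (\<xi> x \<le> N \<and> finite H \<and>
      (\<forall>z. z \<noteq> x \<longrightarrow> \<xi> z \<le> 1 \<and> (\<xi> z \<noteq> 0 \<longrightarrow> z \<in> H))))"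

definition Fp :: "nat \<Rightarrow> (nat\<Rightarrow>real) \<Rightarrow> (nat\<Rightarrow>real) \<Rightarrow> int \<Rightarrow> cstate \<Rightarrow> real" where
  "Fp M A B x s = (case s of (\<xi>,H,c) \<Rightarrow> if c then 1 else (real (card H) * A (\<xi> x) + B (\<xi> x)) / real M)"

lemma upd_c: "snd (snd s) \<Longrightarrow> snd (snd (upd x s t)) "
  by (cases s; cases t) (auto simp: upd_def)

lemma step_c:
  assumes "snd (snd s)" "s' \<in> set_pmf (step N M a b x s)" shows "snd (snd s')"
  using assms upd_c by (cases s) (auto simp: step_def split: if_splits)

context
  fixes N M :: nat and a b :: real and x :: int
  assumes N2: "N \<ge> 2" and a0: "a \<ge> 0" and b0: "b \<ge> 0"
begin

lemma NN: "real N * (real N - 1) > 0" using N2 by simp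

lemma rate_nonneg:
  assumes "Inv N x (\<xi>,H,False)" shows "rate N M a b \<xi> t \<ge> 0"
proof -
  have le: "\<xi> z \<le> N" for z
  proof (cases "z = x")
    case True then show ?thesis using assms unfolding Inv_def by auto
  next
    case False then have "\<xi> z \<le> 1" using assms unfolding Inv_def by auto
    then show ?thesis using N2 by linarith
  qed
  have kk: "real k * (real k - 1) \<ge> 0" for k :: nat by (cases k) auto
  have p: "a / (real N * (real N - 1)) \<ge> 0" "b / (real N * (real N - 1)) \<ge> 0"
    using a0 b0 NN by auto
  show ?thesis
  proof (cases t)
    case (Death z) then show ?thesis by (simp add: rate_def)
  next
    case (Birth y z)
    have n1: "real N - real (\<xi> z) \<ge> 0" using le[of z] by simp
    have q: "real (\<xi> y) * (real (\<xi> y) - 1) \<ge> 0" "real (\<xi> z) * (real (\<xi> z) - 1) \<ge> 0" using kk by auto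
    have p2: "(1 / (2 * real M)) * (b / (real N * (real N - 1))) \<ge> 0" using p(2) by (intro mult_nonneg_nonneg) auto
    have e: "\<And>X k n. (X::real) * k * (k - 1) * n = X * (k * (k-1)) * n" by (simp add: mult.assoc)
    have "a / (real N * (real N - 1)) * real (\<xi> z) * (real (\<xi> z) - 1) * (real N - real (\<xi> z)) \<ge> 0"
      unfolding e using p q n1 by (intro mult_nonneg_nonneg[OF mult_nonneg_nonneg]) (auto intro: mult_nonneg_nonneg)
    moreover have "(1 / (2 * real M)) * (b / (real N * (real N - 1))) * real (\<xi> y) * (real (\<xi> y) - 1) * (real N - real (\<xi> z)) \<ge> 0"
      unfolding e using p2 q n1 by (intro mult_nonneg_nonneg[OF mult_nonneg_nonneg]) auto
    ultimately show ?thesis using Birth by (simp add: rate_def)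
  qed
qed

lemma rate_other:
  assumes "Inv N x (\<xi>,H,False)" "y \<noteq> x" shows "rate N M a b \<xi> (Birth y z) = 0"
proof -
  have "\<xi> y \<le> 1" using assms unfolding Inv_def by auto
  then have "\<xi> y = 0 \<or> \<xi> y = 1" by auto
  then show ?thesis unfolding rate_def by (cases "y = z") auto
qed

end



context
  fixes N M :: nat and a b :: real and x :: int
  assumes N2: "N \<ge> 2" and a0: "a \<ge> 0" and b0: "b \<ge> 0"
begin

lemma upd_inv:
  assumes I: "Inv N x (\<xi>,H,False)" and r: "rate N M a b \<xi> t \<noteq> 0"
  shows "Inv N x (upd x (\<xi>,H,False) t)"
proof (cases t)
  case (Death z) then show ?thesis using I unfolding Inv_def upd_def by auto
next
  case (Birth y z)
  show ?thesis
  proof (cases "y = x")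
    case False then show ?thesis using rate_other[OF N2 a0 b0 I False] r Birth by simp
  next
    case yx: True
    show ?thesis
    proof (cases "z = x")
      case True
      then have "real N - real (\<xi> x) \<noteq> 0" using r Birth yx by (auto simp: rate_def)
      then have "\<xi> x < N" using I unfolding Inv_def by auto
      then show ?thesis using I True yx Birth unfolding Inv_def upd_def by auto
    next
      case False
      show ?thesis
      proof (cases "z \<in> H")
        case True then show ?thesis using False yx Birth unfolding Inv_def upd_def by auto
      next
        case zH: False
        then have "\<xi> z = 0" using I False unfolding Inv_def by auto
        then show ?thesis using I zH False yx Birth unfolding Inv_def upd_def by auto
      qed
    qed
  qed
qed

lemma embed_ok:
  assumes I: "Inv N x (\<xi>,H,False)" and fin: "finite (active N M a b \<xi>)"
    and R: "total_rate N M a b \<xi> > 0"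
  shows "\<And>t. 0 \<le> rate N M a b \<xi> t / total_rate N M a b \<xi>"
    and "(\<integral>\<^sup>+t. ennreal (rate N M a b \<xi> t / total_rate N M a b \<xi>) \<partial>count_space UNIV) = 1"
proof -
  show nn: "\<And>t. 0 \<le> rate N M a b \<xi> t / total_rate N M a b \<xi>"
    using rate_nonneg[OF N2 a0 b0 I] R by simp
  have "(\<integral>\<^sup>+t. ennreal (rate N M a b \<xi> t / total_rate N M a b \<xi>) \<partial>count_space UNIV)
     = (\<Sum>t\<in>active N M a b \<xi>. ennreal (rate N M a b \<xi> t / total_rate N M a b \<xi>))"
    using fin unfolding active_def by (intro nn_integral_count_space') auto
  also have "\<dots> = ennreal (\<Sum>t\<in>active N M a b \<xi>. rate N M a b \<xi> t / total_rate N M a b \<xi>)"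
    using nn by (simp add: sum_ennreal)
  also have "(\<Sum>t\<in>active N M a b \<xi>. rate N M a b \<xi> t / total_rate N M a b \<xi>) = 1"
    using R by (simp add: sum_divide_distrib[symmetric] total_rate_def)
  finally show "(\<integral>\<^sup>+t. ennreal (rate N M a b \<xi> t / total_rate N M a b \<xi>) \<partial>count_space UNIV) = 1" by simp
qed

lemma step_inv:
  assumes I: "Inv N x s" and s': "s' \<in> set_pmf (step N M a b x s)"
  shows "Inv N x s'"
proof -
  obtain \<xi> H c where s: "s = (\<xi>,H,c)" by (cases s) auto
  show ?thesis
  proof (cases c)
    case True
    then have "snd (snd s')" using step_c[of s s'] s s' by auto
    then show ?thesis unfolding Inv_def by (cases s') auto
  next
    case False
    show ?thesis
    proof (cases "finite (active N M a b \<xi>) \<and> total_rate N M a b \<xi> > 0")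
      case True
      have I': "Inv N x (\<xi>,H,False)" using I s \<open>\<not> c\<close> by simp
      note e = embed_ok[OF I' conjunct1[OF True] conjunct2[OF True]]
      from s' True obtain t where t: "t \<in> set_pmf (embed_pmf (\<lambda>t. rate N M a b \<xi> t / total_rate N M a b \<xi>))"
        and st: "s' = upd x (\<xi>,H,False) t"
        using \<open>\<not> c\<close> unfolding s step_def by auto
      have "rate N M a b \<xi> t \<noteq> 0" using t set_embed_pmf[OF e(1) e(2)] True by auto
      then show ?thesis using upd_inv[OF I'] st by simp
    next
      case False
      then show ?thesis using s' I unfolding s step_def by auto
    qed
  qed
qed

end



context
  fixes N M :: nat and a b :: real and x :: int and A B :: "nat \<Rightarrow> real"
  assumes N2: "N \<ge> 2" and a0: "a \<ge> 0" and b0: "b \<ge> 0" and M1: "M \<ge> 1"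
    and A0: "\<And>k. A k \<ge> 0" and B0: "\<And>k. B k \<ge> 0"
    and hA: "\<And>k. k \<le> N \<Longrightarrow> real k * (A (k-1) - A k) + alf N a k * (A (k+1) - A k) + eef N b k * real N / 2 \<le> 0"
    and hB: "\<And>k. k \<le> N \<Longrightarrow> real k * (B (k-1) - B k) + alf N a k * (B (k+1) - B k) + eef N b k * real N * A k \<le> 0"
begin

lemma Fp_nonneg: "Fp M A B x s \<ge> 0"
  using A0 B0 by (cases s) (auto simp: Fp_def intro!: divide_nonneg_nonneg add_nonneg_nonneg)

lemma key:
  assumes I: "Inv N x (\<xi>,H,False)" and fin: "finite (active N M a b \<xi>)"
  shows "(\<Sum>t\<in>active N M a b \<xi>. rate N M a b \<xi> t * Fp M A B x (upd x (\<xi>,H,False) t))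
          \<le> total_rate N M a b \<xi> * Fp M A B x (\<xi>,H,False)"
proof -
  define k where "k = \<xi> x"
  define h where "h = real (card H)"
  define F0 where "F0 = Fp M A B x (\<xi>,H,False)"
  define act where "act = active N M a b \<xi>"
  define r where "r = rate N M a b \<xi>"
  define Nb where "Nb = {z. nbr M x z}"
  define Gd where "Gd = (h * A (k-1) + B (k-1)) / real M - F0"
  define Gb where "Gb = (h * A (k+1) + B (k+1)) / real M - F0"
  define G where "G t = (case t of Death z \<Rightarrow> if z = x then Gd else 0
      | Birth y z \<Rightarrow> if y \<noteq> x then 0 else if z = x then Gb
          else if nbr M x z then (if z \<in> H then 1 else 0) + A k / real M else 0)" for t
  define S where "S = insert (Death x) (insert (Birth x x) (Birth x ` Nb))"
  have kN: "k \<le> N" and finH: "finite H" and oth: "\<And>z. z \<noteq> x \<Longrightarrow> \<xi> z \<le> 1 \<and> (\<xi> z \<noteq> 0 \<longrightarrow> z \<in> H)"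
    using I unfolding Inv_def k_def by auto
  have F0: "F0 = (h * A k + B k) / real M" unfolding F0_def Fp_def h_def k_def by simp
  have F0nn: "F0 \<ge> 0" unfolding F0_def by (rule Fp_nonneg)
  have Mpos: "real M > 0" using M1 by simp
  have xNb: "x \<notin> Nb" unfolding Nb_def nbr_def by simp
  have Nbsub: "Nb \<subseteq> {x - int M .. x + int M} - {x}" unfolding Nb_def nbr_def by auto
  have finNb: "finite Nb" using Nbsub finite_subset by blast
  have cardNb: "card Nb \<le> 2 * M"
  proof -
    have "card Nb \<le> card ({x - int M .. x + int M} - {x})" using Nbsub by (intro card_mono) auto
    also have "\<dots> = 2 * M" by (simp add: card_Diff_singleton) 
    finally show ?thesis .
  qed
  have s1: "Fp M A B x (upd x (\<xi>,H,False) t) - F0 \<le> G t" if t: "t \<in> act" for t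
  proof (cases t)
    case (Death z)
    show ?thesis
    proof (cases "z = x")
      case True then show ?thesis using Death unfolding G_def Gd_def F0_def Fp_def upd_def h_def k_def by simp
    next
      case False then show ?thesis using Death unfolding G_def F0_def Fp_def upd_def by simp
    qed
  next
    case (Birth y z)
    show ?thesis
    proof (cases "y = x")
      case False
      then have "r t = 0" using rate_other[OF N2 a0 b0 I False] Birth unfolding r_def by simp
      then show ?thesis using t unfolding act_def active_def r_def by simp
    next
      case yx: True
      show ?thesis
      proof (cases "z = x")
        case True then show ?thesis using Birth yx unfolding G_def Gb_def F0_def Fp_def upd_def h_def k_def by simp
      next
        case zx: False
        show ?thesis
        proof (cases "nbr M x z")
          case False
          then have "r t = 0" using Birth yx zx unfolding r_def rate_def by simp
          then show ?thesis using t unfolding act_def active_def r_def by simp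
        next
          case nb: True
          show ?thesis
          proof (cases "z \<in> H")
            case True
            have "Fp M A B x (upd x (\<xi>,H,False) t) = 1" using Birth yx zx True unfolding Fp_def upd_def by simp
            moreover have "G t = 1 + A k / real M" using Birth yx zx nb True unfolding G_def by simp
            moreover have "A k / real M \<ge> 0" using A0 Mpos by simp
            ultimately show ?thesis using F0nn by linarith
          next
            case False
            have "Fp M A B x (upd x (\<xi>,H,False) t) = ((h + 1) * A k + B k) / real M"
              using Birth yx zx False finH unfolding Fp_def upd_def h_def k_def by simp
            moreover have "G t = A k / real M" using Birth yx zx nb False unfolding G_def by simp
            ultimately show ?thesis unfolding F0 by (simp add: add_divide_distrib algebra_simps)
          qed
        qed
      qed
    qed
  qed
  have rnn: "r t \<ge> 0" for t unfolding r_def by (rule rate_nonneg[OF N2 a0 b0 I])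
  have s2: "(\<Sum>t\<in>act. r t * Fp M A B x (upd x (\<xi>,H,False) t)) - total_rate N M a b \<xi> * F0
        \<le> (\<Sum>t\<in>act. r t * G t)"
  proof -
    have "(\<Sum>t\<in>act. r t * Fp M A B x (upd x (\<xi>,H,False) t)) - total_rate N M a b \<xi> * F0
       = (\<Sum>t\<in>act. r t * (Fp M A B x (upd x (\<xi>,H,False) t) - F0))"
      unfolding total_rate_def act_def r_def by (simp add: algebra_simps sum_subtractf sum_distrib_left)
    also have "\<dots> \<le> (\<Sum>t\<in>act. r t * G t)"
      using s1 rnn by (intro sum_mono mult_left_mono) auto
    finally show ?thesis .
  qed
  have finS: "finite S" unfolding S_def using finNb by simp
  have finact: "finite act" using fin unfolding act_def .
  have s3: "(\<Sum>t\<in>act. r t * G t) = (\<Sum>t\<in>S. r t * G t)"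
  proof -
    have "(\<Sum>t\<in>act. r t * G t) = (\<Sum>t\<in>act \<union> S. r t * G t)"
      using finact finS by (intro sum.mono_neutral_left) (auto simp: act_def active_def r_def)
    also have "\<dots> = (\<Sum>t\<in>S. r t * G t)"
    proof (rule sum.mono_neutral_right)
      show "finite (act \<union> S)" using finact finS by simp
      show "S \<subseteq> act \<union> S" by auto
      show "\<forall>t\<in>act \<union> S - S. r t * G t = 0"
      proof
        fix t assume "t \<in> act \<union> S - S"
        then have tS: "t \<notin> S" by simp
        show "r t * G t = 0"
        proof (cases t)
          case (Death z) then show ?thesis using tS unfolding S_def G_def by auto
        next
          case (Birth y z) then show ?thesis using tS unfolding S_def G_def Nb_def by auto
        qed
      qed
    qed
    finally show ?thesis .
  qed
  define c0 where "c0 = eef N b k * real N / (2 * real M)"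
  have s4: "(\<Sum>t\<in>S. r t * G t) = real k * Gd + alf N a k * Gb + (\<Sum>z\<in>Nb. r (Birth x z) * ((if z \<in> H then 1 else 0) + A k / real M))"
  proof -
    have "(\<Sum>t\<in>S. r t * G t) = r (Death x) * G (Death x) + r (Birth x x) * G (Birth x x) + (\<Sum>t\<in>Birth x ` Nb. r t * G t)"
      unfolding S_def using finNb xNb by (simp add: image_iff)
    also have "(\<Sum>t\<in>Birth x ` Nb. r t * G t) = (\<Sum>z\<in>Nb. r (Birth x z) * G (Birth x z))"
      by (subst sum.reindex) (auto simp: inj_on_def)
    also have "\<dots> = (\<Sum>z\<in>Nb. r (Birth x z) * ((if z \<in> H then 1 else 0) + A k / real M))"
      by (rule sum.cong) (auto simp: G_def Nb_def nbr_def)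
    finally show ?thesis unfolding G_def r_def by (simp add: rate_def alf_def k_def)
  qed
  have eenn: "eef N b k \<ge> 0"
  proof -
    have "real k * (real k - 1) \<ge> 0" by (cases k) auto
    moreover have "b / (real N * (real N - 1)) \<ge> 0" using b0 N2 by simp
    ultimately have "b / (real N * (real N - 1)) * (real k * (real k - 1)) \<ge> 0" by (rule mult_nonneg_nonneg[rotated])
    then show ?thesis unfolding eef_def by (simp add: mult.assoc)
  qed
  have c0nn: "c0 \<ge> 0" unfolding c0_def using eenn Mpos by simp
  have s5: "(\<Sum>z\<in>Nb. r (Birth x z) * ((if z \<in> H then 1 else 0) + A k / real M)) \<le> c0 * (h + 2 * real M * (A k / real M))"
  proof -
    have "(\<Sum>z\<in>Nb. r (Birth x z) * ((if z \<in> H then 1 else 0) + A k / real M))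
        \<le> (\<Sum>z\<in>Nb. c0 * ((if z \<in> H then 1 else 0) + A k / real M))"
    proof (rule sum_mono)
      fix z assume z: "z \<in> Nb"
      have g: "(if z \<in> H then 1 else 0) + A k / real M \<ge> 0" using A0 Mpos by simp
      have "r (Birth x z) = (1 / (2 * real M)) * eef N b k * (real N - real (\<xi> z))"
        using z unfolding r_def rate_def Nb_def nbr_def eef_def k_def by (simp add: mult.assoc)
      also have "\<dots> \<le> (1 / (2 * real M)) * eef N b k * real N"
        using eenn Mpos by (intro mult_left_mono) auto
      also have "\<dots> = c0" unfolding c0_def by simp
      finally show "r (Birth x z) * ((if z \<in> H then 1 else 0) + A k / real M) \<le> c0 * ((if z \<in> H then 1 else 0) + A k / real M)"
        using g by (intro mult_right_mono) auto
    qed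
    also have "\<dots> = c0 * (real (card (Nb \<inter> H)) + real (card Nb) * (A k / real M))"
    proof -
      have "(\<Sum>z\<in>Nb. if z \<in> H then 1 else (0::real)) = real (card {z\<in>Nb. z \<in> H})"
        using sum.inter_filter[OF finNb, of "\<lambda>_. (1::real)" "\<lambda>z. z \<in> H", symmetric] by simp
      then show ?thesis by (simp add: sum_distrib_left[symmetric] sum.distrib Int_def)
    qed
    also have "\<dots> \<le> c0 * (h + 2 * real M * (A k / real M))"
    proof (intro mult_left_mono add_mono c0nn)
      show "real (card (Nb \<inter> H)) \<le> h" unfolding h_def using finH by (simp add: card_mono)
      show "real (card Nb) * (A k / real M) \<le> 2 * real M * (A k / real M)"
        using cardNb A0 Mpos by (intro mult_right_mono) auto
    qed
    finally show ?thesis .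
  qed
  define LA where "LA = real k * (A (k-1) - A k) + alf N a k * (A (k+1) - A k) + eef N b k * real N / 2"
  define LB where "LB = real k * (B (k-1) - B k) + alf N a k * (B (k+1) - B k) + eef N b k * real N * A k"
  have eq: "real k * Gd + alf N a k * Gb + c0 * (h + 2 * real M * (A k / real M)) = (h * LA + LB) / real M"
    unfolding Gd_def Gb_def F0 c0_def LA_def LB_def using Mpos by (simp add: field_simps)
  have "h * LA \<le> 0" unfolding LA_def using hA[OF kN] h_def by (simp add: mult_nonneg_nonpos)
  moreover have "LB \<le> 0" unfolding LB_def using hB[OF kN] .
  ultimately have "(h * LA + LB) / real M \<le> 0" using Mpos by (simp add: divide_nonpos_pos)
  then have "(\<Sum>t\<in>act. r t * Fp M A B x (upd x (\<xi>,H,False) t)) - total_rate N M a b \<xi> * F0 \<le> 0"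
    using s2 s3 s4 s5 eq by linarith
  then show ?thesis unfolding act_def r_def F0_def by simp
qed

end



context
  fixes N M :: nat and a b :: real and x :: int and A B :: "nat \<Rightarrow> real"
  assumes N2: "N \<ge> 2" and a0: "a \<ge> 0" and b0: "b \<ge> 0" and M1: "M \<ge> 1"
    and A0: "\<And>k. A k \<ge> 0" and B0: "\<And>k. B k \<ge> 0"
    and hA: "\<And>k. k \<le> N \<Longrightarrow> real k * (A (k-1) - A k) + alf N a k * (A (k+1) - A k) + eef N b k * real N / 2 \<le> 0"
    and hB: "\<And>k. k \<le> N \<Longrightarrow> real k * (B (k-1) - B k) + alf N a k * (B (k+1) - B k) + eef N b k * real N * A k \<le> 0"
begin

lemma step_F:
  assumes I: "Inv N x s"
  shows "(\<integral>\<^sup>+s'. ennreal (Fp M A B x s') \<partial>measure_pmf (step N M a b x s)) \<le> ennreal (Fp M A B x s)"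
proof -
  obtain \<xi> H c where s: "s = (\<xi>,H,c)" by (cases s) auto
  show ?thesis
  proof (cases c)
    case True
    have "(\<integral>\<^sup>+s'. ennreal (Fp M A B x s') \<partial>measure_pmf (step N M a b x s)) = (\<integral>\<^sup>+s'. 1 \<partial>measure_pmf (step N M a b x s))"
    proof (rule nn_integral_cong_AE)
      show "AE s' in measure_pmf (step N M a b x s). ennreal (Fp M A B x s') = 1"
      proof (rule AE_pmfI)
        fix s' assume "s' \<in> set_pmf (step N M a b x s)"
        then have "snd (snd s')" using step_c[of s s'] s True by auto
        then show "ennreal (Fp M A B x s') = 1" unfolding Fp_def by (cases s') auto
      qed
    qed
    also have "\<dots> = 1" by simp
    finally show ?thesis using s True by (simp add: Fp_def)
  next
    case nc: False
    have I': "Inv N x (\<xi>,H,False)" using I s nc by simp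
    show ?thesis
    proof (cases "finite (active N M a b \<xi>) \<and> total_rate N M a b \<xi> > 0")
      case False
      then have "step N M a b x s = return_pmf s" unfolding s step_def by auto
      then show ?thesis by simp
    next
      case True
      define R where "R = total_rate N M a b \<xi>"
      define act where "act = active N M a b \<xi>"
      define f where "f t = rate N M a b \<xi> t / R" for t
      have fin: "finite act" and Rp: "R > 0" using True unfolding R_def act_def by auto
      note e = embed_ok[OF N2 a0 b0 I' conjunct1[OF True] conjunct2[OF True]]
      have e1: "\<And>t. 0 \<le> f t" and e2: "(\<integral>\<^sup>+t. ennreal (f t) \<partial>count_space UNIV) = 1"
        using e unfolding f_def R_def by auto
      have st: "step N M a b x s = map_pmf (upd x (\<xi>,H,False)) (embed_pmf f)"
        unfolding s step_def f_def R_def using True nc by simp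
      have "(\<integral>\<^sup>+s'. ennreal (Fp M A B x s') \<partial>measure_pmf (step N M a b x s))
          = (\<integral>\<^sup>+t. ennreal (Fp M A B x (upd x (\<xi>,H,False) t)) \<partial>measure_pmf (embed_pmf f))"
        unfolding st by simp
      also have "\<dots> = (\<Sum>t\<in>act. ennreal (Fp M A B x (upd x (\<xi>,H,False) t)) * pmf (embed_pmf f) t)"
      proof (rule nn_integral_measure_pmf_support)
        show "finite act" by (rule fin)
        fix t assume "t \<in> set_pmf (embed_pmf f)" "t \<notin> act"
        then show "ennreal (Fp M A B x (upd x (\<xi>,H,False) t)) = 0"
          using set_embed_pmf[OF e1 e2] unfolding act_def active_def f_def by auto
      qed auto
      also have "\<dots> = (\<Sum>t\<in>act. ennreal (Fp M A B x (upd x (\<xi>,H,False) t) * f t))"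
        using pmf_embed_pmf[OF e1 e2] e1 Fp_nonneg[OF N2 a0 b0 M1 A0 B0 hA hB]
        by (simp add: ennreal_mult)
      also have "\<dots> = ennreal (\<Sum>t\<in>act. Fp M A B x (upd x (\<xi>,H,False) t) * f t)"
        using e1 Fp_nonneg[OF N2 a0 b0 M1 A0 B0 hA hB] by (simp add: sum_ennreal)
      also have "\<dots> \<le> ennreal (Fp M A B x s)"
      proof (rule ennreal_leI)
        have "(\<Sum>t\<in>act. Fp M A B x (upd x (\<xi>,H,False) t) * f t)
            = (\<Sum>t\<in>act. rate N M a b \<xi> t * Fp M A B x (upd x (\<xi>,H,False) t)) / R"
          unfolding f_def by (simp add: sum_divide_distrib mult.commute)
        also have "\<dots> \<le> R * Fp M A B x (\<xi>,H,False) / R"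
          using key[OF N2 a0 b0 M1 A0 B0 hA hB I' conjunct1[OF True]] Rp unfolding R_def act_def
          by (intro divide_right_mono) auto
        also have "\<dots> = Fp M A B x s" using Rp s nc by simp
        finally show "(\<Sum>t\<in>act. Fp M A B x (upd x (\<xi>,H,False) t) * f t) \<le> Fp M A B x s" .
      qed
      finally show ?thesis .
    qed
  qed
qed

lemma chain_inv: "Inv N x s0 \<Longrightarrow> s \<in> set_pmf (chain N M a b x n s0) \<Longrightarrow> Inv N x s"
proof (induction n arbitrary: s)
  case 0 then show ?case by simp
next
  case (Suc n)
  then obtain s1 where "s1 \<in> set_pmf (chain N M a b x n s0)" "s \<in> set_pmf (step N M a b x s1)" by auto
  then show ?case using step_inv[OF N2 a0 b0] Suc.IH Suc.prems(1) by blast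
qed

lemma chain_F: "Inv N x s0 \<Longrightarrow>
  (\<integral>\<^sup>+s. ennreal (Fp M A B x s) \<partial>measure_pmf (chain N M a b x n s0)) \<le> ennreal (Fp M A B x s0)"
proof (induction n)
  case 0 then show ?case by simp
next
  case (Suc n)
  have "(\<integral>\<^sup>+s. ennreal (Fp M A B x s) \<partial>measure_pmf (chain N M a b x (Suc n) s0))
     = (\<integral>\<^sup>+s. (\<integral>\<^sup>+s'. ennreal (Fp M A B x s') \<partial>measure_pmf (step N M a b x s)) \<partial>measure_pmf (chain N M a b x n s0))"
    by simp
  also have "\<dots> \<le> (\<integral>\<^sup>+s. ennreal (Fp M A B x s) \<partial>measure_pmf (chain N M a b x n s0))"
  proof (rule nn_integral_mono_AE)
    show "AE s in measure_pmf (chain N M a b x n s0).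
      (\<integral>\<^sup>+s'. ennreal (Fp M A B x s') \<partial>measure_pmf (step N M a b x s)) \<le> ennreal (Fp M A B x s)"
      using step_F chain_inv Suc.prems by (intro AE_pmfI) blast
  qed
  also have "\<dots> \<le> ennreal (Fp M A B x s0)" using Suc by simp
  finally show ?case .
qed

lemma prob_bound:
  "measure_pmf.prob (chain N M a b x n (one_at N x, {}, False)) {s. snd (snd s)} \<le> B N / real M"
proof -
  have I0: "Inv N x (one_at N x, {}, False)" unfolding Inv_def one_at_def by auto
  let ?p = "chain N M a b x n (one_at N x, {}, False)"
  have "emeasure (measure_pmf ?p) {s. snd (snd s)} = (\<integral>\<^sup>+s. indicator {s. snd (snd s)} s \<partial>measure_pmf ?p)"
    by simp
  also have "\<dots> \<le> (\<integral>\<^sup>+s. ennreal (Fp M A B x s) \<partial>measure_pmf ?p)"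
  proof (rule nn_integral_mono)
    fix s :: cstate
    show "indicator {s. snd (snd s)} s \<le> ennreal (Fp M A B x s)"
      by (cases s) (auto simp: Fp_def indicator_def)
  qed
  also have "\<dots> \<le> ennreal (Fp M A B x (one_at N x, {}, False))" by (rule chain_F[OF I0])
  also have "Fp M A B x (one_at N x, {}, False) = B N / real M" unfolding Fp_def one_at_def by simp
  finally have "ennreal (measure_pmf.prob ?p {s. snd (snd s)}) \<le> ennreal (B N / real M)"
    by (simp add: measure_pmf.emeasure_eq_measure)
  then show ?thesis using B0 M1 by (subst (asm) ennreal_le_iff) auto
qed

lemma coll_bound: "collision_prob N M a b x \<le> B N / real M"
  unfolding collision_prob_def by (rule cSUP_least) (auto intro: prob_bound)

end



lemma powr_part:
  fixes Bn :: real and M :: nat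
  assumes Bn: "Bn \<ge> 0" and M: "real M \<ge> (2 * Bn + 1) ^ 3"
  shows "Bn / real M \<le> real M powr (-1/3) / 2"
proof -
  define K where "K = 2 * Bn + 1"
  have K1: "K \<ge> 1" unfolding K_def using Bn by simp
  have "K ^ 3 \<ge> 1" using K1 by (rule one_le_power)
  then have Mp: "real M > 0" using M unfolding K_def[symmetric] by linarith
  have "K ^ 3 = K powr (real 3)" using K1 by (subst powr_realpow) auto
  then have "(K ^ 3) powr (1/3) = K powr (real 3 * (1/3))" by (simp add: powr_powr)
  then have "K = (K ^ 3) powr (1/3)" using K1 by simp
  also have "\<dots> \<le> real M powr (1/3)" using M K1 unfolding K_def[symmetric] by (intro powr_mono2) auto
  finally have K3: "K \<le> real M powr (1/3)" .
  have "real M powr (2/3) = real M powr (1/3 + 1/3)" by simp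
  also have "\<dots> = real M powr (1/3) * real M powr (1/3)" by (rule powr_add)
  finally have "real M powr (2/3) = real M powr (1/3) * real M powr (1/3)" .
  also have "\<dots> \<ge> K * K" using K3 K1 by (intro mult_mono) auto
  finally have "real M powr (2/3) \<ge> K * K" .
  moreover have "K * K \<ge> K" using K1 by (simp add: mult_le_cancel_left1)
  ultimately have h2: "2 * Bn \<le> real M powr (2/3)" unfolding K_def by linarith
  have "real M powr (2/3) = real M powr (-1/3 + 1)" by simp
  also have "\<dots> = real M powr (-1/3) * real M powr 1" by (rule powr_add)
  finally have e: "real M powr (2/3) = real M powr (-1/3) * real M" using Mp by simp
  have "Bn / real M = (2 * Bn) / (2 * real M)" by simp
  also have "\<dots> \<le> real M powr (2/3) / (2 * real M)" using h2 Mp by (intro divide_right_mono) auto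
  also have "\<dots> = real M powr (-1/3) / 2" unfolding e using Mp by simp
  finally show ?thesis .
qed

theorem lemma5p2:
  fixes N :: nat and a b :: real
  assumes "N \<ge> 2" and "a \<ge> 0" and "b \<ge> 0"
  shows "\<exists>M0::nat. \<forall>M\<ge>M0. \<forall>x::int.
     (a < 4 \<longrightarrow> collision_prob N M a b x
        \<le> real M powr (-1/3) * (1/2 + b * real N * inverse (1 - a/4)))
   \<and> (a = 4 \<longrightarrow> collision_prob N M a b x
        \<le> real M powr (-1/3) * (1/2 + (b/2) * (real N + 2)^2))
   \<and> (a > 4 \<longrightarrow> collision_prob N M a b x
        \<le> real M powr (-1/3) * (1/2 + b * inverse ((a/4 - 1)^2) * (a/4) ^ (N + 2)))"
proof -
  note N2 = assms(1) and a0 = assms(2) and b0 = assms(3)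
  have NN: "real N * (real N - 1) > 0" using N2 by simp
  have alnn: "alf N a k \<ge> 0" if "k \<in> {1..N}" for k
  proof -
    have "a / (real N * (real N - 1)) * (real k * (real k - 1)) * (real N - real k) \<ge> 0"
      using that a0 NN by (intro mult_nonneg_nonneg) auto
    then show ?thesis unfolding alf_def by (simp add: mult.assoc)
  qed
  have eenn: "eef N b k \<ge> 0" for k
  proof -
    have "real k * (real k - 1) \<ge> 0" by (cases k) auto
    then have "b / (real N * (real N - 1)) * (real k * (real k - 1)) \<ge> 0"
      using b0 NN by (intro mult_nonneg_nonneg[of "b / (real N * (real N - 1))"]) auto
    then show ?thesis unfolding eef_def by (simp add: mult.assoc)
  qed
  have alN: "alf N a N = 0" unfolding alf_def by simp
  have al0: "alf N a 0 = 0" and ee0: "eef N b 0 = 0" unfolding alf_def eef_def by simp_all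
  obtain A where A: "A 0 = 0" "\<forall>k. A k \<ge> 0"
    "\<forall>k\<in>{1..N}. real k * (A (k-1) - A k) + alf N a k * (A (k+1) - A k) + eef N b k * real N / 2 \<le> 0"
    using supersol[of N "alf N a" "\<lambda>k. eef N b k * real N / 2"] alnn eenn alN by auto
  obtain B where B: "B 0 = 0" "\<forall>k. B k \<ge> 0"
    "\<forall>k\<in>{1..N}. real k * (B (k-1) - B k) + alf N a k * (B (k+1) - B k) + eef N b k * real N * A k \<le> 0"
    using supersol[of N "alf N a" "\<lambda>k. eef N b k * real N * A k"] alnn eenn alN A(2) by auto
  have hA: "\<And>k. k \<le> N \<Longrightarrow> real k * (A (k-1) - A k) + alf N a k * (A (k+1) - A k) + eef N b k * real N / 2 \<le> 0"
  proof -
    fix k assume "k \<le> N"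
    then show "real k * (A (k-1) - A k) + alf N a k * (A (k+1) - A k) + eef N b k * real N / 2 \<le> 0"
      using A(3) al0 ee0 by (cases "k = 0") auto
  qed
  have hB: "\<And>k. k \<le> N \<Longrightarrow> real k * (B (k-1) - B k) + alf N a k * (B (k+1) - B k) + eef N b k * real N * A k \<le> 0"
  proof -
    fix k assume "k \<le> N"
    then show "real k * (B (k-1) - B k) + alf N a k * (B (k+1) - B k) + eef N b k * real N * A k \<le> 0"
      using B(3) al0 ee0 by (cases "k = 0") auto
  qed
  define K where "K = 2 * B N + 1"
  define M0 where "M0 = nat \<lceil>K ^ 3\<rceil> + 1"
  have main: "collision_prob N M a b x \<le> real M powr (-1/3) / 2" if M: "M \<ge> M0" for M x
  proof -
    have M1: "M \<ge> 1" using M unfolding M0_def by simp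
    have "real M \<ge> K ^ 3" using M unfolding M0_def by linarith
    then have "B N / real M \<le> real M powr (-1/3) / 2"
      using B(2) unfolding K_def by (intro powr_part) auto
    moreover have "collision_prob N M a b x \<le> B N / real M"
      using coll_bound[OF N2 a0 b0 M1 _ _ hA hB] A(2) B(2) by blast
    ultimately show ?thesis by linarith
  qed
  have pm: "real M powr (-1/3) \<ge> 0" for M by simp
  show ?thesis
  proof (intro exI allI impI conjI)
    fix M x assume M: "M0 \<le> M"
    have ge: "real M powr (-1/3) / 2 \<le> real M powr (-1/3) * (1/2 + C)" if "C \<ge> 0" for C
      using that pm[of M] by (simp add: algebra_simps mult_nonneg_nonneg)
    {
      assume "a < 4"
      then have "b * real N * inverse (1 - a/4) \<ge> 0" using b0 by simp
      then show "collision_prob N M a b x \<le> real M powr (-1/3) * (1/2 + b * real N * inverse (1 - a/4))"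
        by (rule order_trans[OF main[OF M] ge])
    }
    {
      have "(b/2) * (real N + 2)^2 \<ge> 0" using b0 by simp
      then show "collision_prob N M a b x \<le> real M powr (-1/3) * (1/2 + (b/2) * (real N + 2)^2)"
        by (rule order_trans[OF main[OF M] ge])
    }
    {
      assume "a > 4"
      then have "b * inverse ((a/4 - 1)^2) * (a/4) ^ (N + 2) \<ge> 0" using b0 by simp
      then show "collision_prob N M a b x \<le> real M powr (-1/3) * (1/2 + b * inverse ((a/4 - 1)^2) * (a/4) ^ (N + 2))"
        by (rule order_trans[OF main[OF M] ge])
    }
  qed
qed


end
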